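(* There exists an upwards-oriented translating soliton in $\mathbb{H}^2\times\mathbb{R}$ which is rotationally symmetric about a vertical axis and is an entire vertical graph over $\mathbb{H}^2$.
   Context: $\mathbb{H}^2\times\mathbb{R}$ carries the product metric $\langle\cdot,\cdot\rangle$ of the hyperbolic plane of curvature $-1$ and the real line; $\partial_z$ is the unit vertical vector field. An oriented immersed surface $M$ with unit normal $\eta$ and mean curvature $H_M$ (half the trace of the second fundamental form with respect to $\eta$) is a translating soliton if $H_M=\langle\eta,\partial_z\rangle$ at every point. Upwards-oriented means $\langle\eta,\partial_z\rangle>0$ on the graph. A vertical axis is a line $\{o\}\times\mathbb{R}$, $o\in\mathbb{H}^2$, and rotations about it are the isometries $(x,z)\mapsto(\rho(x),z)$ with $\rho$ a hyperbolic rotation fixing $o$. *)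

theory Defs
  imports "HOL-Analysis.Analysis"
begin

text \<open>H^2 is the unit disk in the complex plane with
  the conformal metric lam(z)^2 |dz|^2, lam(z) = 2/(1-|z|^2) (curvature -1).
  H^2 x R is the product; a vertical graph is z = u(x), u : H^2 \<Rightarrow> R.\<close>

definition hdisk :: "complex set" where
  "hdisk = ball 0 1"

definition lam :: "complex \<Rightarrow> real" where
  "lam z = 2 / (1 - (cmod z)\<^sup>2)"

definition egrad :: "(complex \<Rightarrow> real) \<Rightarrow> complex \<Rightarrow> complex" where
  "egrad u z = Complex (frechet_derivative u (at z) 1) (frechet_derivative u (at z) \<i>)"

definition ediv :: "(complex \<Rightarrow> complex) \<Rightarrow> complex \<Rightarrow> real" where
  "ediv X z = Re (frechet_derivative X (at z) 1) + Im (frechet_derivative X (at z) \<i>)"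

text \<open>Riemannian gradient, squared norm and divergence for the hyperbolic metric
  g = lam^2 delta in these coordinates.\<close>
definition hgrad :: "(complex \<Rightarrow> real) \<Rightarrow> complex \<Rightarrow> complex" where
  "hgrad u z = (1 / (lam z)\<^sup>2) *\<^sub>R egrad u z"

definition hnormsq :: "complex \<Rightarrow> complex \<Rightarrow> real" where
  "hnormsq z v = (lam z)\<^sup>2 * (cmod v)\<^sup>2"

definition hdiv :: "(complex \<Rightarrow> complex) \<Rightarrow> complex \<Rightarrow> real" where
  "hdiv X z = (1 / (lam z)\<^sup>2) * ediv (\<lambda>w. (lam w)\<^sup>2 *\<^sub>R X w) z"

text \<open>For the graph of u, W = sqrt(1+|grad u|^2); the upward unit normal is
  eta = (-grad u + d/dz)/W, so <eta, d/dz> = 1/W, and the mean curvature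
  (half the trace of the second fundamental form w.r.t. eta) is
  (1/2) div (grad u / W).\<close>
definition Wg :: "(complex \<Rightarrow> real) \<Rightarrow> complex \<Rightarrow> real" where
  "Wg u z = sqrt (1 + hnormsq z (hgrad u z))"

definition graph_unit_field :: "(complex \<Rightarrow> real) \<Rightarrow> complex \<Rightarrow> complex" where
  "graph_unit_field u w = (1 / Wg u w) *\<^sub>R hgrad u w"

definition graph_mean_curv :: "(complex \<Rightarrow> real) \<Rightarrow> complex \<Rightarrow> real" where
  "graph_mean_curv u z = (1/2) * hdiv (graph_unit_field u) z"

definition normal_vert :: "(complex \<Rightarrow> real) \<Rightarrow> complex \<Rightarrow> real" where
  "normal_vert u z = 1 / Wg u z"

definition C2_on_disk :: "(complex \<Rightarrow> real) \<Rightarrow> bool" where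
  "C2_on_disk u \<longleftrightarrow>
     (\<forall>z\<in>hdisk. u differentiable (at z) \<and> egrad u differentiable (at z)) \<and>
     continuous_on hdisk (egrad u) \<and>
     (\<forall>v. continuous_on hdisk (\<lambda>z. frechet_derivative (egrad u) (at z) v))"

definition entire_upward_translator_graph :: "(complex \<Rightarrow> real) \<Rightarrow> bool" where
  "entire_upward_translator_graph u \<longleftrightarrow>
     C2_on_disk u \<and>
     (\<forall>z\<in>hdisk. normal_vert u z > 0 \<and> graph_mean_curv u z = normal_vert u z)"

text \<open>Disk automorphism moving p to 0, and hyperbolic rotations about p.\<close>
definition mob :: "complex \<Rightarrow> complex \<Rightarrow> complex" where
  "mob p z = (z - p) / (1 - cnj p * z)"

definition hrot :: "complex \<Rightarrow> real \<Rightarrow> complex \<Rightarrow> complex" where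
  "hrot p \<theta> z = mob (- p) (cis \<theta> * mob p z)"

definition rot_symmetric :: "complex \<Rightarrow> (complex \<Rightarrow> real) \<Rightarrow> bool" where
  "rot_symmetric p u \<longleftrightarrow> (\<forall>\<theta> z. z \<in> hdisk \<longrightarrow> u (hrot p \<theta> z) = u z)"

end

theory Submission
  imports Defs
begin
definition clampc :: "real \<Rightarrow> real" where
  "clampc x = max (-(12/13)) (min (12/13) x)"

definition GG :: "real \<Rightarrow> real" where
  "GG x = sqrt (1 - (clampc x)\<^sup>2)"

lemma clampc_bounds: "\<bar>clampc x\<bar> \<le> 12/13"
  unfolding clampc_def by auto

lemma clampc_lip: "\<bar>clampc x - clampc y\<bar> \<le> \<bar>x - y\<bar>"
  unfolding clampc_def by auto

lemma clampc_sq: "(clampc x)\<^sup>2 \<le> (12/13)\<^sup>2"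
proof -
  have "(clampc x)\<^sup>2 = \<bar>clampc x\<bar>\<^sup>2" by simp
  also have "\<dots> \<le> (12/13)\<^sup>2" by (rule power_mono[OF clampc_bounds]) simp
  finally show ?thesis .
qed

lemma GG_ge: "5/13 \<le> GG x"
proof -
  have "(5/13)\<^sup>2 \<le> 1 - (clampc x)\<^sup>2" using clampc_sq[of x] by (simp add: power2_eq_square)
  thus ?thesis unfolding GG_def by (metis real_le_rsqrt)
qed

lemma GG_le: "GG x \<le> 1"
  unfolding GG_def by simp

lemma GG_lip: "\<bar>GG x - GG y\<bar> \<le> 12/5 * \<bar>x - y\<bar>"
proof -
  let ?a = "1 - (clampc x)\<^sup>2" and ?b = "1 - (clampc y)\<^sup>2"
  have a0: "?a \<ge> 0" and b0: "?b \<ge> 0" using clampc_sq[of x] clampc_sq[of y]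
    by (simp_all add: power2_eq_square)
  have sa: "sqrt ?a \<ge> 5/13" "sqrt ?b \<ge> 5/13" using GG_ge[of x] GG_ge[of y] unfolding GG_def by auto
  have "(sqrt ?a - sqrt ?b) * (sqrt ?a + sqrt ?b) = ?a - ?b"
    using a0 b0 by (simp add: algebra_simps)
  hence e: "\<bar>sqrt ?a - sqrt ?b\<bar> * (sqrt ?a + sqrt ?b) = \<bar>?a - ?b\<bar>"
    by (metis abs_mult abs_of_nonneg add_nonneg_nonneg real_sqrt_ge_zero a0 b0)
  have "\<bar>?a - ?b\<bar> = \<bar>clampc y - clampc x\<bar> * \<bar>clampc y + clampc x\<bar>"
    by (simp add: power2_eq_square abs_mult[symmetric] algebra_simps)
  also have "\<dots> \<le> \<bar>x - y\<bar> * (24/13)"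
  proof (rule mult_mono)
    show "\<bar>clampc y - clampc x\<bar> \<le> \<bar>x - y\<bar>" using clampc_lip[of y x] by (simp add: abs_minus_commute)
    show "\<bar>clampc y + clampc x\<bar> \<le> 24/13"
      using abs_triangle_ineq[of "clampc y" "clampc x"] clampc_bounds[of x] clampc_bounds[of y] by linarith
  qed auto
  finally have f: "\<bar>sqrt ?a - sqrt ?b\<bar> * (sqrt ?a + sqrt ?b) \<le> \<bar>x - y\<bar> * (24/13)"
    using e by simp
  have "\<bar>sqrt ?a - sqrt ?b\<bar> * (10/13) \<le> \<bar>sqrt ?a - sqrt ?b\<bar> * (sqrt ?a + sqrt ?b)"
    using sa by (intro mult_left_mono) auto
  hence "\<bar>sqrt ?a - sqrt ?b\<bar> * (10/13) \<le> \<bar>x - y\<bar> * (24/13)" using f by linarith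
  thus ?thesis unfolding GG_def by simp
qed

lemma cont_clampc: "continuous_on UNIV clampc"
  unfolding clampc_def by (intro continuous_intros)

lemma cont_GG: "continuous_on UNIV GG"
  unfolding GG_def by (intro continuous_intros cont_clampc)


definition hfun :: "(real \<Rightarrow> real) \<Rightarrow> real \<Rightarrow> real" where
  "hfun \<phi> t = 2 * sinh t * GG (\<phi> t)"

definition Aop :: "(real \<Rightarrow> real) \<Rightarrow> real \<Rightarrow> real" where
  "Aop \<phi> r = (if r \<le> 0 then 0 else integral {0..r} (hfun \<phi>) / sinh r)"

lemma hfun_cont: "continuous_on UNIV \<phi> \<Longrightarrow> continuous_on S (hfun \<phi>)"
  unfolding hfun_def
  by (intro continuous_intros continuous_on_compose2[OF cont_GG, of S \<phi>])
     (auto intro: continuous_on_subset)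

lemma hfun_int: "continuous_on UNIV \<phi> \<Longrightarrow> hfun \<phi> integrable_on {a..b}"
  by (intro integrable_continuous_interval hfun_cont)

lemma int_hfun_bounds:
  assumes c: "continuous_on UNIV \<phi>" and r: "0 \<le> r"
  shows "0 \<le> integral {0..r} (hfun \<phi>) \<and> integral {0..r} (hfun \<phi>) \<le> 2 * r * sinh r"
proof
  show "0 \<le> integral {0..r} (hfun \<phi>)"
    by (rule integral_nonneg[OF hfun_int[OF c]])
       (auto simp: hfun_def intro!: mult_nonneg_nonneg order.trans[OF _ GG_ge])
  have "integral {0..r} (hfun \<phi>) \<le> integral {0..r} (\<lambda>t. 2 * sinh r)"
  proof (rule integral_le[OF hfun_int[OF c]])
    show "(\<lambda>t. 2 * sinh r) integrable_on {0..r}" by (intro integrable_continuous_interval continuous_intros)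
    fix t assume t: "t \<in> {0..r}"
    have "2 * sinh t * GG (\<phi> t) \<le> 2 * sinh t * 1"
      using t GG_le by (intro mult_left_mono) auto
    also have "\<dots> \<le> 2 * sinh r" using t by simp
    finally show "hfun \<phi> t \<le> 2 * sinh r" by (simp add: hfun_def)
  qed
  also have "\<dots> = 2 * r * sinh r" using r by simp
  finally show "integral {0..r} (hfun \<phi>) \<le> 2 * r * sinh r" .
qed

lemma Aop_bounds:
  assumes c: "continuous_on UNIV \<phi>"
  shows "0 \<le> Aop \<phi> r \<and> Aop \<phi> r \<le> 2 * max 0 r"
proof (cases "r \<le> 0")
  case True thus ?thesis by (simp add: Aop_def)
next
  case False
  hence r: "r > 0" by simp
  have s: "sinh r > 0" using r by simp
  from int_hfun_bounds[OF c, of r] r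
  have "0 \<le> integral {0..r} (hfun \<phi>)" "integral {0..r} (hfun \<phi>) \<le> 2 * r * sinh r" by auto
  thus ?thesis using r s by (auto simp: Aop_def divide_simps)
qed

lemma int_isCont:
  assumes c: "continuous_on UNIV \<phi>" and x: "x > 0"
  shows "((\<lambda>r. integral {0..r} (hfun \<phi>)) has_real_derivative hfun \<phi> x) (at x)"
proof -
  have "((\<lambda>r. integral {0..r} (hfun \<phi>)) has_real_derivative hfun \<phi> x) (at x within {0..x+1})"
    by (rule integral_has_real_derivative[OF hfun_cont[OF c]]) (use x in simp)
  moreover have "at x within {0..x+1} = at x"
    by (rule at_within_interior) (use x in simp)
  ultimately show ?thesis by metis
qed

lemma Aop_cont:
  assumes c: "continuous_on UNIV \<phi>"
  shows "continuous_on {0..} (Aop \<phi>)"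
  unfolding continuous_on_eq_continuous_within
proof
  fix x :: real assume x: "x \<in> {0..}"
  show "continuous (at x within {0..}) (Aop \<phi>)"
  proof (cases "x = 0")
    case True
    have "(Aop \<phi> \<longlongrightarrow> 0) (at 0 within {0..})"
    proof (rule tendsto_sandwich[of "\<lambda>_. 0" _ _ "\<lambda>r. 2 * r"])
      show "\<forall>\<^sub>F r in at 0 within {0..}. 0 \<le> Aop \<phi> r"
        by (rule always_eventually) (use Aop_bounds[OF c] in blast)
      show "\<forall>\<^sub>F r in at 0 within {0..}. Aop \<phi> r \<le> 2 * r"
        unfolding eventually_at_filter
        by (intro always_eventually allI impI) (metis Aop_bounds[OF c] atLeast_iff max.absorb2)
      show "((\<lambda>r::real. 2 * r) \<longlongrightarrow> 0) (at 0 within {0..})"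
        using tendsto_mult[OF tendsto_const[of "2::real"] tendsto_ident_at[of "0::real" "{0..}"]] by simp
      show "((\<lambda>_. 0) \<longlongrightarrow> (0::real)) (at 0 within {0..})" by (rule tendsto_const)
    qed
    thus ?thesis using True by (simp add: continuous_within Aop_def)
  next
    case False
    hence xp: "x > 0" using x by auto
    have "\<forall>y\<in>{0<..}. isCont (\<lambda>r. integral {0..r} (hfun \<phi>) / sinh r) y"
    proof
      fix y :: real assume "y \<in> {0<..}"
      hence y: "y > 0" by simp
      have "isCont (\<lambda>r. integral {0..r} (hfun \<phi>)) y" by (rule DERIV_isCont[OF int_isCont[OF c y]])
      moreover have "sinh y \<noteq> 0" using y by simp
      ultimately show "isCont (\<lambda>r. integral {0..r} (hfun \<phi>) / sinh r) y"
        by (intro isCont_divide isCont_sinh)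
    qed
    hence "continuous_on {0<..} (\<lambda>r. integral {0..r} (hfun \<phi>) / sinh r)"
      by (rule continuous_at_imp_continuous_on)
    hence "continuous_on {0<..} (Aop \<phi>)"
      by (rule continuous_on_eq) (simp add: Aop_def)
    hence "isCont (Aop \<phi>) x" using xp
      by (simp add: continuous_on_eq_continuous_at)
    thus ?thesis by (rule continuous_at_imp_continuous_within)
  qed
qed

definition Tfun :: "(real \<Rightarrow>\<^sub>C real) \<Rightarrow> real \<Rightarrow> real" where
  "Tfun \<psi> r = exp (-10 * max 0 r) * Aop (\<lambda>t. exp (10*t) * apply_bcontfun \<psi> t) (max 0 r)"

lemma cont_ex: "continuous_on UNIV (\<lambda>t. exp (10*t::real) * apply_bcontfun \<psi> t)"
  by (intro continuous_intros) auto

lemma Tfun_bcont: "Tfun \<psi> \<in> bcontfun"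
proof (rule bcontfun_normI)
  have "continuous_on UNIV (\<lambda>r. (\<lambda>m. exp (-10 * m) * Aop (\<lambda>t. exp (10*t) * apply_bcontfun \<psi> t) m) (max 0 r))"
    by (rule continuous_on_compose2[of "{0..}"])
       (auto intro!: continuous_intros Aop_cont[OF cont_ex])
  thus "continuous_on UNIV (Tfun \<psi>)" by (simp add: Tfun_def)
  fix r
  let ?m = "max 0 (r::real)"
  have b: "0 \<le> Aop (\<lambda>t. exp (10*t) * apply_bcontfun \<psi> t) ?m"
          "Aop (\<lambda>t. exp (10*t) * apply_bcontfun \<psi> t) ?m \<le> 2 * ?m"
    using Aop_bounds[OF cont_ex, of \<psi> ?m] by auto
  have "0 \<le> ?m" by simp
  hence "2 * ?m \<le> exp (10 * ?m)" using exp_ge_add_one_self[of "10 * ?m"] by linarith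
  hence e1: "exp (-10 * ?m) * (2 * ?m) \<le> 1"
    by (simp add: exp_minus field_simps)
  have e2: "exp (-10 * ?m) * Aop (\<lambda>t. exp (10*t) * apply_bcontfun \<psi> t) ?m \<le> exp (-10 * ?m) * (2 * ?m)"
    using b by (intro mult_left_mono) auto
  have e3: "0 \<le> exp (-10 * ?m) * Aop (\<lambda>t. exp (10*t) * apply_bcontfun \<psi> t) ?m"
    using b by simp
  show "norm (Tfun \<psi> r) \<le> 1" unfolding Tfun_def real_norm_def
    using e1 e2 e3 by linarith
qed

definition Top :: "(real \<Rightarrow>\<^sub>C real) \<Rightarrow> (real \<Rightarrow>\<^sub>C real)" where
  "Top \<psi> = Bcontfun (Tfun \<psi>)"

lemma Top_apply: "apply_bcontfun (Top \<psi>) = Tfun \<psi>"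
  by (simp add: Top_def Bcontfun_inverse Tfun_bcont)

lemma int_exp10:
  fixes m :: real
  assumes "0 \<le> m"
  shows "integral {0..m} (\<lambda>t. exp (10 * t)) = (exp (10 * m) - 1) / 10"
proof -
  have "((\<lambda>t::real. exp (10 * t)) has_integral (exp (10 * m) / 10 - exp (10 * 0) / 10)) {0..m}"
    using assms
    by (intro fundamental_theorem_of_calculus)
       (auto intro!: derivative_eq_intros simp: has_real_derivative_iff_has_vector_derivative[symmetric])
  thus ?thesis by (simp add: integral_unique diff_divide_distrib)
qed

lemma aux_alg:
  fixes s d m :: real
  assumes "s > 0"
  shows "exp (-10 * m) / s * ((24/5 * s * d) * ((exp (10 * m) - 1) / 10)) = 12/25 * d * (1 - exp (-10 * m))"
proof -
  have E: "exp (-10 * m) * exp (10 * m) = 1" by (simp add: exp_add[symmetric])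
  have "exp (-10 * m) / s * ((24/5 * s * d) * ((exp (10 * m) - 1) / 10))
        = 12/25 * d * (exp (-10 * m) * exp (10 * m) - exp (-10 * m))"
    using assms by (simp add: field_simps)
  thus ?thesis using E by simp
qed

lemma Top_contr: "dist (Top \<psi>1) (Top \<psi>2) \<le> 12/25 * dist \<psi>1 \<psi>2"
proof (rule dist_bound)
  fix r :: real
  let ?m = "max 0 r" and ?d = "dist \<psi>1 \<psi>2"
  define \<phi>1 where "\<phi>1 = (\<lambda>t. exp (10*t) * apply_bcontfun \<psi>1 t)"
  define \<phi>2 where "\<phi>2 = (\<lambda>t. exp (10*t) * apply_bcontfun \<psi>2 t)"
  have c1: "continuous_on UNIV \<phi>1" and c2: "continuous_on UNIV \<phi>2"
    unfolding \<phi>1_def \<phi>2_def by (rule cont_ex)+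
  have d0: "0 \<le> ?d" by simp
  show "dist (apply_bcontfun (Top \<psi>1) r) (apply_bcontfun (Top \<psi>2) r) \<le> 12/25 * ?d"
  proof (cases "?m = 0")
    case True
    have "Tfun \<psi>1 r = 0" "Tfun \<psi>2 r = 0" unfolding Tfun_def Aop_def using True by simp_all
    thus ?thesis using d0 by (simp add: Top_apply)
  next
    case False
    hence m: "?m > 0" by simp
    have s: "sinh ?m > 0" using m by simp
    have "integral {0..?m} (hfun \<phi>1) - integral {0..?m} (hfun \<phi>2)
          = integral {0..?m} (\<lambda>t. hfun \<phi>1 t - hfun \<phi>2 t)"
      by (rule integral_diff[symmetric]) (intro hfun_int c1 c2)+
    also have "\<bar>\<dots>\<bar> \<le> integral {0..?m} (\<lambda>t. (24/5 * sinh ?m * ?d) * exp (10 * t))"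
    proof -
      have "norm (integral {0..?m} (\<lambda>t. hfun \<phi>1 t - hfun \<phi>2 t)) \<le> integral {0..?m} (\<lambda>t. (24/5 * sinh ?m * ?d) * exp (10 * t))"
      proof (rule integral_norm_bound_integral)
        show "(\<lambda>t. hfun \<phi>1 t - hfun \<phi>2 t) integrable_on {0..?m}"
          by (intro integrable_diff hfun_int c1 c2)
        show "(\<lambda>t. (24/5 * sinh ?m * ?d) * exp (10 * t)) integrable_on {0..?m}"
          by (intro integrable_continuous_interval continuous_intros)
        fix t assume t: "t \<in> {0..?m}"
        have st: "0 \<le> sinh t" "sinh t \<le> sinh ?m" using t by auto
        have pd: "\<bar>apply_bcontfun \<psi>1 t - apply_bcontfun \<psi>2 t\<bar> \<le> ?d"
          using dist_bounded[of \<psi>1 t \<psi>2] by (simp add: dist_real_def)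
        have "\<bar>hfun \<phi>1 t - hfun \<phi>2 t\<bar> = 2 * sinh t * \<bar>GG (\<phi>1 t) - GG (\<phi>2 t)\<bar>"
          using st by (simp add: hfun_def abs_mult right_diff_distrib[symmetric])
        also have "\<dots> \<le> 2 * sinh t * (12/5 * \<bar>\<phi>1 t - \<phi>2 t\<bar>)"
          using st GG_lip by (intro mult_left_mono) auto
        also have "\<bar>\<phi>1 t - \<phi>2 t\<bar> = exp (10 * t) * \<bar>apply_bcontfun \<psi>1 t - apply_bcontfun \<psi>2 t\<bar>"
          by (simp add: \<phi>1_def \<phi>2_def abs_mult right_diff_distrib[symmetric])
        also have "2 * sinh t * (12/5 * (exp (10 * t) * \<bar>apply_bcontfun \<psi>1 t - apply_bcontfun \<psi>2 t\<bar>))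
                   \<le> 2 * sinh ?m * (12/5 * (exp (10 * t) * ?d))"
          using st pd by (intro mult_mono) auto
        also have "2 * sinh ?m * (12/5 * (exp (10 * t) * ?d)) = (24/5 * sinh ?m * ?d) * exp (10 * t)"
          by simp
        finally show "norm (hfun \<phi>1 t - hfun \<phi>2 t) \<le> (24/5 * sinh ?m * ?d) * exp (10 * t)"
          by simp
      qed
      thus ?thesis by simp
    qed
    also have "\<dots> = (24/5 * sinh ?m * ?d) * ((exp (10 * ?m) - 1) / 10)"
      using int_exp10[of ?m] by simp
    finally have I: "\<bar>integral {0..?m} (hfun \<phi>1) - integral {0..?m} (hfun \<phi>2)\<bar>
                    \<le> (24/5 * sinh ?m * ?d) * ((exp (10 * ?m) - 1) / 10)" .
    have "dist (Tfun \<psi>1 r) (Tfun \<psi>2 r)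
          = exp (-10 * ?m) / sinh ?m * \<bar>integral {0..?m} (hfun \<phi>1) - integral {0..?m} (hfun \<phi>2)\<bar>"
      using m s unfolding Tfun_def Aop_def \<phi>1_def[symmetric] \<phi>2_def[symmetric] dist_real_def
      by (simp add: abs_mult diff_divide_distrib[symmetric] right_diff_distrib[symmetric])
    also have "\<dots> \<le> exp (-10 * ?m) / sinh ?m * ((24/5 * sinh ?m * ?d) * ((exp (10 * ?m) - 1) / 10))"
      using mult_left_mono[OF I, of "exp (-10 * ?m) / sinh ?m"] s by simp
    also have "\<dots> = 12/25 * ?d * (1 - exp (-10 * ?m))"
      using s by (rule aux_alg)
    also have "\<dots> \<le> 12/25 * ?d" using d0 by (simp add: mult_left_le)
    finally show ?thesis by (simp add: Top_apply)
  qed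
qed

lemma fixpoint_exists: "\<exists>\<psi>. Top \<psi> = \<psi>"
  using banach_fix_type[of "12/25" Top] Top_contr by auto

definition psi0 :: "real \<Rightarrow>\<^sub>C real" where "psi0 = (SOME \<psi>. Top \<psi> = \<psi>)"
definition phi0 :: "real \<Rightarrow> real" where "phi0 = (\<lambda>t. exp (10*t) * apply_bcontfun psi0 t)"

lemma psi0_fix: "Top psi0 = psi0"
  unfolding psi0_def using fixpoint_exists by (rule someI_ex)

lemma phi0_cont: "continuous_on UNIV phi0"
  unfolding phi0_def by (rule cont_ex)

lemma phi0_eq: assumes "0 \<le> r" shows "phi0 r = Aop phi0 r"
proof -
  have "apply_bcontfun psi0 r = Tfun psi0 r" using psi0_fix by (metis Top_apply)
  hence "apply_bcontfun psi0 r = exp (-10 * r) * Aop phi0 r"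
    using assms by (simp add: Tfun_def phi0_def)
  hence "phi0 r = exp (10 * r) * (exp (-10 * r) * Aop phi0 r)"
    by (simp add: phi0_def)
  also have "\<dots> = Aop phi0 r" by (simp add: exp_minus)
  finally show ?thesis .
qed

lemma phi0_bounds: assumes "0 \<le> r" shows "0 \<le> phi0 r" "phi0 r \<le> 2 * r"
  using Aop_bounds[OF phi0_cont, of r] phi0_eq[OF assms] assms by auto

definition II :: "real \<Rightarrow> real" where "II r = integral {0..r} (hfun phi0)"

lemma II_eq: assumes "0 \<le> r" shows "II r = sinh r * phi0 r"
proof (cases "r = 0")
  case True thus ?thesis by (simp add: II_def)
next
  case False
  hence "r > 0" using assms by simp
  thus ?thesis using phi0_eq[OF assms] by (simp add: Aop_def II_def)
qed

lemma int_sinh: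
  fixes a b :: real
  assumes "a \<le> b"
  shows "integral {a..b} (\<lambda>t. c * sinh t) = c * (cosh b - cosh a)"
proof -
  have "((\<lambda>t. c * sinh t) has_integral (c * cosh b - c * cosh a)) {a..b}"
    using assms
    by (intro fundamental_theorem_of_calculus)
       (auto intro!: derivative_eq_intros simp: has_real_derivative_iff_has_vector_derivative[symmetric])
  hence "integral {a..b} (\<lambda>t. c * sinh t) = c * cosh b - c * cosh a" by (rule integral_unique)
  thus ?thesis by (metis right_diff_distrib)
qed

lemma GG_top: assumes "12/13 \<le> x" shows "GG x = 5/13"
proof -
  have cx: "clampc x = 12/13" using assms by (simp add: clampc_def)
  have e: "1 - (12/13::real)\<^sup>2 = (5/13)\<^sup>2" by (simp add: power2_eq_square)
  have "GG x = sqrt ((5/13)\<^sup>2)" unfolding GG_def cx e ..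
  thus ?thesis by simp
qed

lemma phi0_le: assumes r1: "0 \<le> r1" shows "phi0 r1 \<le> 12/13"
proof (rule ccontr)
  assume "\<not> phi0 r1 \<le> 12/13"
  hence big: "phi0 r1 > 12/13" by simp
  define S where "S = {0..r1} \<inter> {t. phi0 t \<le> 12/13}"
  have cS: "closed S" unfolding S_def
    by (intro closed_Int closed_Collect_le phi0_cont continuous_intros) auto
  have "0 \<in> S" using r1 by (simp add: S_def phi0_eq Aop_def)
  hence ne: "S \<noteq> {}" by auto
  have bS: "bdd_above S" unfolding S_def by (auto intro: bdd_aboveI[of _ r1])
  define r0 where "r0 = Sup S"
  have r0S: "r0 \<in> S" unfolding r0_def by (rule closed_contains_Sup[OF ne bS cS])
  hence r0: "0 \<le> r0" "r0 \<le> r1" "phi0 r0 \<le> 12/13" by (auto simp: S_def)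
  have after: "phi0 t > 12/13" if "r0 < t" "t \<le> r1" for t
  proof (rule ccontr)
    assume "\<not> phi0 t > 12/13"
    hence "t \<in> S" using that r0 by (auto simp: S_def)
    hence "t \<le> r0" unfolding r0_def by (rule cSup_upper[OF _ bS])
    thus False using that by simp
  qed
  have "\<exists>x. r0 \<le> x \<and> x \<le> r1 \<and> phi0 x = 12/13"
    using r0 big by (intro IVT') (auto intro: continuous_on_subset[OF phi0_cont])
  then obtain x where x: "r0 \<le> x" "x \<le> r1" "phi0 x = 12/13" by auto
  have "x = r0" using after[of x] x by force
  hence eq0: "phi0 r0 = 12/13" using x by simp
  have lt: "r0 < r1" using eq0 big r0 by (cases "r0 = r1") auto
  have ge: "12/13 \<le> phi0 t" if "t \<in> {r0..r1}" for t
    using that after[of t] eq0 by (cases "t = r0") auto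
  have "II r1 = II r0 + integral {r0..r1} (hfun phi0)"
    unfolding II_def using Henstock_Kurzweil_Integration.integral_combine[OF r0(1) r0(2) hfun_int[OF phi0_cont]] by simp
  also have "integral {r0..r1} (hfun phi0) = integral {r0..r1} (\<lambda>t. 10/13 * sinh t)"
    by (intro integral_cong) (simp add: hfun_def GG_top[OF ge])
  also have "\<dots> = 10/13 * (cosh r1 - cosh r0)" using r0 by (intro int_sinh)
  finally have E: "sinh r1 * phi0 r1 = sinh r0 * (12/13) + 10/13 * (cosh r1 - cosh r0)"
    using II_eq r0 r1 eq0 by simp
  have s1: "sinh r1 > 0" using lt r0 by simp
  have c1: "cosh r0 \<le> cosh r1" using r0 by (simp add: cosh_real_nonneg_le_iff)
  have "exp (- r1) \<le> exp (- r0)" using r0 by simp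
  hence c2: "cosh r1 - cosh r0 \<le> sinh r1 - sinh r0" using cosh_minus_sinh[of r1] cosh_minus_sinh[of r0]
    by linarith
  have "sinh r1 * (12/13) < sinh r1 * phi0 r1" using s1 big by simp
  also have "\<dots> \<le> sinh r0 * (12/13) + 12/13 * (cosh r1 - cosh r0)" using E c1 by simp
  also have "\<dots> \<le> sinh r1 * (12/13)" using mult_left_mono[OF c2, of "12/13"] by (simp add: algebra_simps)
  finally show False by simp
qed

lemma GG_phi0: assumes "0 \<le> t" shows "GG (phi0 t) = sqrt (1 - (phi0 t)\<^sup>2)"
  using phi0_bounds[OF assms] phi0_le[OF assms] by (simp add: GG_def clampc_def)

definition RR :: "real \<Rightarrow> real" where "RR \<rho> = ln ((1 + \<rho>) / (1 - \<rho>))"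

lemma RR_0: "RR 0 = 0" by (simp add: RR_def)

lemma RR_pos: assumes "0 < \<rho>" "\<rho> < 1" shows "0 < RR \<rho>"
  using assms by (simp add: RR_def)

lemma RR_nonneg: assumes "0 \<le> \<rho>" "\<rho> < 1" shows "0 \<le> RR \<rho>"
  using assms by (simp add: RR_def)

lemma exp_RR: assumes "\<bar>\<rho>\<bar> < 1" shows "exp (RR \<rho>) = (1 + \<rho>) / (1 - \<rho>)"
  using assms unfolding RR_def by (subst exp_ln) auto

lemma exp_mRR: assumes "\<bar>\<rho>\<bar> < 1" shows "exp (- RR \<rho>) = (1 - \<rho>) / (1 + \<rho>)"
  using exp_RR[OF assms] by (simp add: exp_minus)

lemma sinh_RR: assumes "\<bar>\<rho>\<bar> < 1" shows "sinh (RR \<rho>) = 2 * \<rho> / (1 - \<rho>\<^sup>2)"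
proof -
  have a: "1 - \<rho> > 0" "1 + \<rho> > 0" using assms by auto
  have b: "1 - \<rho> * \<rho> \<noteq> 0" using assms by (metis abs_square_less_1 less_irrefl power2_eq_square right_minus_eq)
  have "sinh (RR \<rho>) = (exp (RR \<rho>) - exp (- RR \<rho>)) / 2" by (simp add: sinh_def)
  also have "\<dots> = ((1 + \<rho>) / (1 - \<rho>) - (1 - \<rho>) / (1 + \<rho>)) / 2"
    using exp_RR[OF assms] exp_mRR[OF assms] by simp
  also have "\<dots> = 2 * \<rho> / (1 - \<rho>\<^sup>2)"
    using a b by (simp add: field_simps power2_eq_square)
  finally show ?thesis .
qed

lemma cosh_RR: assumes "\<bar>\<rho>\<bar> < 1" shows "cosh (RR \<rho>) = (1 + \<rho>\<^sup>2) / (1 - \<rho>\<^sup>2)"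
proof -
  have a: "1 - \<rho> > 0" "1 + \<rho> > 0" using assms by auto
  have b: "1 - \<rho> * \<rho> \<noteq> 0" using assms by (metis abs_square_less_1 less_irrefl power2_eq_square right_minus_eq)
  have "cosh (RR \<rho>) = (exp (RR \<rho>) + exp (- RR \<rho>)) / 2" by (simp add: cosh_def)
  also have "\<dots> = ((1 + \<rho>) / (1 - \<rho>) + (1 - \<rho>) / (1 + \<rho>)) / 2"
    using exp_RR[OF assms] exp_mRR[OF assms] by simp
  also have "\<dots> = (1 + \<rho>\<^sup>2) / (1 - \<rho>\<^sup>2)"
    using a b by (simp add: field_simps power2_eq_square)
  finally show ?thesis .
qed

lemma RR_deriv: assumes "\<bar>\<rho>\<bar> < 1" shows "(RR has_real_derivative 2 / (1 - \<rho>\<^sup>2)) (at \<rho>)"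
proof -
  have a: "1 - \<rho> > 0" "1 + \<rho> > 0" using assms by auto
  have b: "1 - \<rho> * \<rho> \<noteq> 0" using assms by (metis abs_square_less_1 less_irrefl power2_eq_square right_minus_eq)
  have d: "((\<lambda>x. (1+x)/(1-x)) has_real_derivative ((0+1)*(1-\<rho>) - (1+\<rho>)*(0-1))/((1-\<rho>)*(1-\<rho>))) (at \<rho>)"
    by (intro DERIV_divide DERIV_add DERIV_diff DERIV_const DERIV_ident) (use a in auto)
  have p: "0 < (1+\<rho>)/(1-\<rho>)" using a by simp
  have "(RR has_real_derivative inverse ((1+\<rho>)/(1-\<rho>)) * (((0+1)*(1-\<rho>) - (1+\<rho>)*(0-1))/((1-\<rho>)*(1-\<rho>)))) (at \<rho>)"
    unfolding RR_def by (rule DERIV_chain2[OF DERIV_ln[OF p] d])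
  moreover have "inverse ((1+\<rho>)/(1-\<rho>)) * (((0+1)*(1-\<rho>) - (1+\<rho>)*(0-1))/((1-\<rho>)*(1-\<rho>))) = 2 / (1 - \<rho>\<^sup>2)"
  proof -
    have n: "1 - \<rho> \<noteq> 0" "1 + \<rho> \<noteq> 0" using a by auto
    have e: "1 - \<rho>\<^sup>2 = (1+\<rho>)*(1-\<rho>)" by (simp add: power2_eq_square algebra_simps)
    have e2: "((0+1)*(1-\<rho>) - (1+\<rho>)*(0-1)) = (2::real)" by simp
    have "inverse ((1+\<rho>)/(1-\<rho>)) * (2/((1-\<rho>)*(1-\<rho>))) = ((1-\<rho>)/(1+\<rho>)) * (2/((1-\<rho>)*(1-\<rho>)))"
      by (simp add: inverse_divide)
    also have "\<dots> = 2 / ((1+\<rho>)*(1-\<rho>))" using n by (simp add: divide_simps)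
    finally show ?thesis unfolding e e2 .
  qed
  ultimately show ?thesis by simp
qed

definition Yf :: "real \<Rightarrow> real" where
  "Yf \<rho> = (if \<rho> = 0 then 4 else II (RR \<rho>) / \<rho>\<^sup>2)"

definition Phi :: "real \<Rightarrow> real" where
  "Phi \<rho> = \<rho> * (1 - \<rho>\<^sup>2) * Yf \<rho> / 2"

lemma Phi_eq: assumes "0 \<le> \<rho>" "\<rho> < 1" shows "Phi \<rho> = phi0 (RR \<rho>)"
proof (cases "\<rho> = 0")
  case True
  have "phi0 0 = 0" using phi0_bounds[of 0] by simp
  thus ?thesis using True by (simp add: Phi_def RR_0)
next
  case False
  hence r: "0 < \<rho>" using assms by simp
  have a: "1 - \<rho>\<^sup>2 > 0" using assms by (simp add: abs_square_less_1)
  have "Phi \<rho> = \<rho> * (1 - \<rho>\<^sup>2) * (sinh (RR \<rho>) * phi0 (RR \<rho>) / \<rho>\<^sup>2) / 2"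
    using False II_eq[OF RR_nonneg[OF assms]] by (simp add: Phi_def Yf_def)
  also have "\<dots> = phi0 (RR \<rho>)"
    using r a assms by (simp add: sinh_RR field_simps power2_eq_square)
  finally show ?thesis .
qed

lemma Phi_bounds: assumes "0 \<le> \<rho>" "\<rho> < 1" shows "0 \<le> Phi \<rho>" "Phi \<rho> \<le> 12/13"
  using Phi_eq[OF assms] phi0_bounds[OF RR_nonneg[OF assms]] phi0_le[OF RR_nonneg[OF assms]] by auto

lemma sq_lt1: fixes \<rho> :: real assumes "0 \<le> \<rho>" "\<rho> < 1" shows "0 < 1 - \<rho>\<^sup>2"
proof -
  have "\<rho> * \<rho> \<le> \<rho>" using assms mult_left_le[of \<rho> \<rho>] by simp
  thus ?thesis using assms by (simp add: power2_eq_square)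
qed

definition Jd :: "real \<Rightarrow> real" where
  "Jd \<rho> = hfun phi0 (RR \<rho>) * (2 / (1 - \<rho>\<^sup>2))"

definition Yd :: "real \<Rightarrow> real" where
  "Yd \<rho> = (Jd \<rho> * \<rho>\<^sup>2 - II (RR \<rho>) * (2 * \<rho>)) / (\<rho>\<^sup>2 * \<rho>\<^sup>2)"

lemma II_deriv: assumes "0 < r" shows "(II has_real_derivative hfun phi0 r) (at r)"
  using int_isCont[OF phi0_cont assms] unfolding II_def[abs_def] .

lemma Yf_deriv: assumes "0 < \<rho>" "\<rho> < 1" shows "(Yf has_real_derivative Yd \<rho>) (at \<rho>)"
proof -
  have ab: "\<bar>\<rho>\<bar> < 1" using assms by simp
  have J: "((\<lambda>x. II (RR x)) has_real_derivative Jd \<rho>) (at \<rho>)"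
    unfolding Jd_def by (rule DERIV_chain2[OF II_deriv[OF RR_pos[OF assms]] RR_deriv[OF ab]])
  have sq: "((\<lambda>x. x\<^sup>2) has_real_derivative 2 * \<rho>) (at \<rho>)"
    using DERIV_pow[of 2 \<rho>] by simp
  have "((\<lambda>x. II (RR x) / x\<^sup>2) has_real_derivative Yd \<rho>) (at \<rho>)"
    unfolding Yd_def using assms
    by (intro DERIV_divide[OF J sq]) simp
  thus ?thesis
    by (rule has_field_derivative_transform_within_open[where S="{0<..}"]) (use assms in \<open>auto simp: Yf_def\<close>)
qed

lemma alg1: fixes D r s :: real assumes "D \<noteq> 0"
  shows "2 * (2 * r / D) * s * (2 / D) = 8 * r * s / D\<^sup>2"
  using assms by (simp add: field_simps power2_eq_square)

lemma Y3: assumes "0 < \<rho>" "\<rho> < 1"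
  shows "2 * Yf \<rho> + \<rho> * Yd \<rho> = 8 * sqrt (1 - (Phi \<rho>)\<^sup>2) / (1 - \<rho>\<^sup>2)\<^sup>2"
proof -
  have ab: "\<bar>\<rho>\<bar> < 1" using assms by simp
  have a: "0 < 1 - \<rho>\<^sup>2" using sq_lt1[of \<rho>] assms by simp
  have a': "1 - \<rho>\<^sup>2 \<noteq> 0" using a by simp
  have h: "hfun phi0 (RR \<rho>) = 2 * (2 * \<rho> / (1 - \<rho>\<^sup>2)) * sqrt (1 - (Phi \<rho>)\<^sup>2)"
    unfolding hfun_def sinh_RR[OF ab]
    using assms by (simp add: GG_phi0 RR_nonneg Phi_eq)
  have "Jd \<rho> = 8 * \<rho> * sqrt (1 - (Phi \<rho>)\<^sup>2) / (1 - \<rho>\<^sup>2)\<^sup>2"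
    unfolding Jd_def h using alg1[OF a'] by simp
  moreover have "2 * Yf \<rho> + \<rho> * Yd \<rho> = Jd \<rho> / \<rho>"
    using assms by (simp add: Yf_def Yd_def field_simps power2_eq_square)
  ultimately show ?thesis using assms by simp
qed


lemma II_upper: assumes r: "0 \<le> r" shows "II r \<le> 2 * (cosh r - 1)"
proof -
  have "II r \<le> integral {0..r} (\<lambda>t. 2 * sinh t)"
    unfolding II_def
  proof (rule integral_le[OF hfun_int[OF phi0_cont]])
    show "(\<lambda>t. 2 * sinh t) integrable_on {0..r}" by (intro integrable_continuous_interval continuous_intros)
    fix t assume t: "t \<in> {0..r}"
    have "2 * sinh t * GG (phi0 t) \<le> 2 * sinh t * 1"
      using t GG_le by (intro mult_left_mono) auto
    thus "hfun phi0 t \<le> 2 * sinh t" by (simp add: hfun_def)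
  qed
  also have "\<dots> = 2 * (cosh r - 1)" using int_sinh[OF r, of 2] by simp
  finally show ?thesis .
qed

lemma sqrt_ge_self: fixes x :: real assumes "0 \<le> x" "x \<le> 1" shows "x \<le> sqrt x"
proof -
  have "sqrt x * sqrt x \<le> sqrt x * 1" using assms by (intro mult_left_mono) auto
  thus ?thesis using assms by simp
qed

lemma II_lower: assumes r: "0 \<le> r" shows "(2 * (1 - 4 * r\<^sup>2)) * (cosh r - 1) \<le> II r"
proof -
  have "integral {0..r} (\<lambda>t. (2 * (1 - 4 * r\<^sup>2)) * sinh t) \<le> II r"
    unfolding II_def
  proof (rule integral_le[OF _ hfun_int[OF phi0_cont]])
    show "(\<lambda>t. (2 * (1 - 4 * r\<^sup>2)) * sinh t) integrable_on {0..r}" by (intro integrable_continuous_interval continuous_intros)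
    fix t assume t: "t \<in> {0..r}"
    hence t0: "0 \<le> t" "t \<le> r" by auto
    have p: "0 \<le> phi0 t" "phi0 t \<le> 2 * t" "phi0 t \<le> 12/13" using phi0_bounds[OF t0(1)] phi0_le[OF t0(1)] by auto
    have "(phi0 t)\<^sup>2 \<le> (2 * r)\<^sup>2" using p t0 by (intro power_mono) auto
    hence q: "1 - 4 * r\<^sup>2 \<le> 1 - (phi0 t)\<^sup>2" by (simp add: power2_eq_square)
    have q1: "(phi0 t)\<^sup>2 \<le> 1" using p by (simp add: abs_square_le_1)
    have "1 - (phi0 t)\<^sup>2 \<le> sqrt (1 - (phi0 t)\<^sup>2)" using q1 by (intro sqrt_ge_self) auto
    hence "1 - 4 * r\<^sup>2 \<le> GG (phi0 t)" using q GG_phi0[OF t0(1)] by simp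
    hence "2 * sinh t * (1 - 4 * r\<^sup>2) \<le> 2 * sinh t * GG (phi0 t)"
      using t0 by (intro mult_left_mono) auto
    thus "(2 * (1 - 4 * r\<^sup>2)) * sinh t \<le> hfun phi0 t" by (simp add: hfun_def mult_ac)
  qed
  moreover have "integral {0..r} (\<lambda>t. (2 * (1 - 4 * r\<^sup>2)) * sinh t) = (2 * (1 - 4 * r\<^sup>2)) * (cosh r - 1)"
    using int_sinh[OF r, of "2 * (1 - 4 * r\<^sup>2)"] by simp
  ultimately show ?thesis by linarith
qed

lemma cosh_RR_m1: assumes "0 \<le> \<rho>" "\<rho> < 1" shows "2 * (cosh (RR \<rho>) - 1) = 4 * \<rho>\<^sup>2 / (1 - \<rho>\<^sup>2)"
proof -
  have a: "1 - \<rho>\<^sup>2 \<noteq> 0" using sq_lt1[OF assms] by simp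
  have "2 * ((1 + \<rho>\<^sup>2) / (1 - \<rho>\<^sup>2) - 1) = 4 * \<rho>\<^sup>2 / (1 - \<rho>\<^sup>2)"
    using a by (simp add: field_simps)
  thus ?thesis using cosh_RR[of \<rho>] assms by simp
qed

lemma Yf_bounds: assumes "0 < \<rho>" "\<rho> < 1"
  shows "Yf \<rho> \<le> 4 / (1 - \<rho>\<^sup>2)" "(1 - 4 * (RR \<rho>)\<^sup>2) * (4 / (1 - \<rho>\<^sup>2)) \<le> Yf \<rho>"
proof -
  have r: "0 \<le> RR \<rho>" using RR_nonneg assms by simp
  have c: "2 * (cosh (RR \<rho>) - 1) = 4 * \<rho>\<^sup>2 / (1 - \<rho>\<^sup>2)" using cosh_RR_m1 assms by simp
  have p: "0 < \<rho>\<^sup>2" using assms by simp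
  have Y: "Yf \<rho> = II (RR \<rho>) / \<rho>\<^sup>2" using assms by (simp add: Yf_def)
  have "II (RR \<rho>) \<le> 4 * \<rho>\<^sup>2 / (1 - \<rho>\<^sup>2)" using II_upper[OF r] c by simp
  hence "II (RR \<rho>) / \<rho>\<^sup>2 \<le> (4 * \<rho>\<^sup>2 / (1 - \<rho>\<^sup>2)) / \<rho>\<^sup>2" using p by (intro divide_right_mono) auto
  thus "Yf \<rho> \<le> 4 / (1 - \<rho>\<^sup>2)" using p Y by simp
  have "(1 - 4 * (RR \<rho>)\<^sup>2) * (4 * \<rho>\<^sup>2 / (1 - \<rho>\<^sup>2)) \<le> II (RR \<rho>)"
  proof -
    have e: "(1 - 4 * (RR \<rho>)\<^sup>2) * (4 * \<rho>\<^sup>2 / (1 - \<rho>\<^sup>2)) = (2 * (1 - 4 * (RR \<rho>)\<^sup>2)) * (cosh (RR \<rho>) - 1)"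
      unfolding c[symmetric] by (simp only: mult_ac)
    show ?thesis using II_lower[OF r] e by linarith
  qed
  hence "(1 - 4 * (RR \<rho>)\<^sup>2) * (4 * \<rho>\<^sup>2 / (1 - \<rho>\<^sup>2)) / \<rho>\<^sup>2 \<le> II (RR \<rho>) / \<rho>\<^sup>2"
    using p by (intro divide_right_mono) auto
  thus "(1 - 4 * (RR \<rho>)\<^sup>2) * (4 / (1 - \<rho>\<^sup>2)) \<le> Yf \<rho>" using p Y by simp
qed

lemma isCont_RR0: "isCont RR 0"
  by (rule DERIV_isCont[OF RR_deriv]) simp

lemma Yf_cont0: "continuous (at 0 within {0..<1}) Yf"
proof -
  have c1: "isCont (\<lambda>\<rho>::real. 4 / (1 - \<rho>\<^sup>2)) 0" by (intro continuous_intros) simp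
  have c2: "isCont (\<lambda>\<rho>. (1 - 4 * (RR \<rho>)\<^sup>2) * (4 / (1 - \<rho>\<^sup>2))) 0"
    by (intro continuous_intros isCont_RR0) simp
  have l1: "((\<lambda>\<rho>::real. 4 / (1 - \<rho>\<^sup>2)) \<longlongrightarrow> 4) (at 0 within {0..<1})"
    using continuous_at_imp_continuous_within[OF c1, of "{0..<1}"] by (simp add: continuous_within)
  have l2: "((\<lambda>\<rho>. (1 - 4 * (RR \<rho>)\<^sup>2) * (4 / (1 - \<rho>\<^sup>2))) \<longlongrightarrow> 4) (at 0 within {0..<1})"
    using continuous_at_imp_continuous_within[OF c2, of "{0..<1}"] by (simp add: continuous_within RR_0)
  have "(Yf \<longlongrightarrow> 4) (at 0 within {0..<1})"
  proof (rule tendsto_sandwich[OF _ _ l2 l1])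
    show "\<forall>\<^sub>F \<rho> in at 0 within {0..<1}. (1 - 4 * (RR \<rho>)\<^sup>2) * (4 / (1 - \<rho>\<^sup>2)) \<le> Yf \<rho>"
      unfolding eventually_at_filter
    proof (intro always_eventually allI impI)
      fix \<rho> :: real assume "\<rho> \<noteq> 0" "\<rho> \<in> {0..<1}"
      thus "(1 - 4 * (RR \<rho>)\<^sup>2) * (4 / (1 - \<rho>\<^sup>2)) \<le> Yf \<rho>" using Yf_bounds(2)[of \<rho>] by simp
    qed
    show "\<forall>\<^sub>F \<rho> in at 0 within {0..<1}. Yf \<rho> \<le> 4 / (1 - \<rho>\<^sup>2)"
      unfolding eventually_at_filter
    proof (intro always_eventually allI impI)
      fix \<rho> :: real assume "\<rho> \<noteq> 0" "\<rho> \<in> {0..<1}"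
      thus "Yf \<rho> \<le> 4 / (1 - \<rho>\<^sup>2)" using Yf_bounds(1)[of \<rho>] by simp
    qed
  qed
  thus ?thesis by (simp add: continuous_within Yf_def)
qed

lemma Yf_cont: "continuous_on {0..<1} Yf"
  unfolding continuous_on_eq_continuous_within
proof
  fix x :: real assume x: "x \<in> {0..<1}"
  show "continuous (at x within {0..<1}) Yf"
  proof (cases "x = 0")
    case True thus ?thesis using Yf_cont0 by simp
  next
    case False
    hence "0 < x" "x < 1" using x by auto
    hence "(Yf has_real_derivative Yd x) (at x)" by (rule Yf_deriv)
    hence "isCont Yf x" by (rule DERIV_isCont)
    thus ?thesis by (rule continuous_at_imp_continuous_within)
  qed
qed

lemma Phi_cont: "continuous_on {0..<1} Phi"
  unfolding Phi_def[abs_def] by (intro continuous_intros Yf_cont) simp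

definition Zf :: "real \<Rightarrow> real" where
  "Zf \<rho> = 8 * sqrt (1 - (Phi \<rho>)\<^sup>2) / (1 - \<rho>\<^sup>2)\<^sup>2 - 2 * Yf \<rho>"

lemma nz1: fixes x :: real shows "0 \<le> x \<Longrightarrow> x < 1 \<Longrightarrow> (1 - x\<^sup>2)\<^sup>2 \<noteq> 0"
  using sq_lt1[of x] by simp

lemma Zf_cont: "continuous_on {0..<1} Zf"
proof -
  have a: "continuous_on {0..<1} (\<lambda>\<rho>. sqrt (1 - (Phi \<rho>)\<^sup>2))"
    by (intro continuous_on_real_sqrt continuous_on_diff continuous_on_const continuous_on_power Phi_cont)
  have b: "continuous_on {0..<1} (\<lambda>\<rho>::real. (1 - \<rho>\<^sup>2)\<^sup>2)"
    by (intro continuous_on_power continuous_on_diff continuous_on_const continuous_on_id)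
  have c: "\<forall>x\<in>{0..<1::real}. (1 - x\<^sup>2)\<^sup>2 \<noteq> 0" using nz1 by auto
  have d: "continuous_on {0..<1} (\<lambda>\<rho>. 8 * sqrt (1 - (Phi \<rho>)\<^sup>2) / (1 - \<rho>\<^sup>2)\<^sup>2)"
    by (rule continuous_on_divide[OF continuous_on_mult[OF continuous_on_const a] b c])
  show ?thesis unfolding Zf_def[abs_def]
    by (rule continuous_on_diff[OF d continuous_on_mult[OF continuous_on_const Yf_cont]])
qed

lemma Zf_0: "Zf 0 = 0" by (simp add: Zf_def Phi_def Yf_def)

lemma Yf_0: "Yf 0 = 4" by (simp add: Yf_def)
lemma Phi_0: "Phi 0 = 0" by (simp add: Phi_def)

lemma Yd_Zf: assumes "0 < \<rho>" "\<rho> < 1" shows "\<rho> * Yd \<rho> = Zf \<rho>"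
  using Y3[OF assms] by (simp add: Zf_def)

lemma norm_img: "cmod ` ball 0 1 \<subseteq> {0..<1}"
  by auto

lemma comp_cont:
  fixes g :: "real \<Rightarrow> real"
  assumes "continuous_on {0..<1} g"
  shows "continuous_on (ball 0 1) (\<lambda>w::complex. g (cmod w))"
  by (rule continuous_on_compose2[OF assms continuous_on_norm_id norm_img])

lemma comp_isCont0:
  fixes g :: "real \<Rightarrow> real"
  assumes "continuous_on {0..<1} g"
  shows "isCont (\<lambda>w::complex. g (cmod w)) 0"
  using comp_cont[OF assms] by (simp add: continuous_on_eq_continuous_at)

lemma norm_deriv:
  fixes z :: complex
  assumes "z \<noteq> 0"
  shows "(cmod has_derivative (\<lambda>h. h \<bullet> z / cmod z)) (at z)"
proof -
  have "(cmod has_derivative (\<lambda>h. h \<bullet> sgn z)) (at z)" using has_derivative_norm[OF assms] .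
  moreover have "(\<lambda>h. h \<bullet> sgn z) = (\<lambda>h. h \<bullet> z / cmod z)"
    by (simp add: sgn_div_norm divide_inverse mult.commute)
  ultimately show ?thesis by simp
qed

lemma radial_deriv:
  fixes g gd q :: "real \<Rightarrow> real" and z :: complex
  assumes gc: "continuous_on {0..<1} g"
    and gd: "\<And>\<rho>. 0 < \<rho> \<Longrightarrow> \<rho> < 1 \<Longrightarrow> (g has_real_derivative gd \<rho>) (at \<rho>)"
    and gq: "\<And>\<rho>. 0 < \<rho> \<Longrightarrow> \<rho> < 1 \<Longrightarrow> \<rho> * gd \<rho> = q \<rho>"
    and z: "cmod z < 1"
  shows "((\<lambda>w. g (cmod w) *\<^sub>R w) has_derivative
          (\<lambda>v. g (cmod z) *\<^sub>R v + (q (cmod z) * (z \<bullet> v) / (cmod z)\<^sup>2) *\<^sub>R z)) (at z)"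
proof (cases "z = 0")
  case False
  let ?r = "cmod z"
  have r: "0 < ?r" "?r < 1" using False z by auto
  have gcomp: "((\<lambda>w. g (cmod w)) has_derivative (\<lambda>h. gd ?r * (h \<bullet> z / ?r))) (at z)"
    using has_derivative_compose[OF norm_deriv[OF False] gd[OF r, unfolded has_field_derivative_def]] .
  have "((\<lambda>w. g (cmod w) *\<^sub>R w) has_derivative
          (\<lambda>h. g (cmod z) *\<^sub>R h + (gd ?r * (h \<bullet> z / ?r)) *\<^sub>R z)) (at z)"
    using has_derivative_scaleR[OF gcomp has_derivative_ident] .
  moreover have "(\<lambda>h. g (cmod z) *\<^sub>R h + (gd ?r * (h \<bullet> z / ?r)) *\<^sub>R z)
     = (\<lambda>v. g (cmod z) *\<^sub>R v + (q (cmod z) * (z \<bullet> v) / (cmod z)\<^sup>2) *\<^sub>R z)"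
  proof
    fix v
    have "gd ?r * (v \<bullet> z / ?r) = (?r * gd ?r) * (z \<bullet> v) / ?r\<^sup>2"
      using r by (simp add: inner_commute power2_eq_square field_simps)
    thus "g (cmod z) *\<^sub>R v + (gd ?r * (v \<bullet> z / ?r)) *\<^sub>R z = g (cmod z) *\<^sub>R v + (q (cmod z) * (z \<bullet> v) / (cmod z)\<^sup>2) *\<^sub>R z"
      using gq[OF r] by simp
  qed
  ultimately show ?thesis by simp
next
  case True
  have lin: "bounded_linear (\<lambda>v::complex. g 0 *\<^sub>R v)" by (rule bounded_linear_scaleR_right)
  have c0: "isCont (\<lambda>w::complex. g (cmod w)) 0" by (rule comp_isCont0[OF gc])
  hence "((\<lambda>h::complex. g (cmod h) - g 0) \<longlongrightarrow> 0) (at 0)"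
    unfolding isCont_def using LIM_zero by fastforce
  hence l: "((\<lambda>h::complex. \<bar>g (cmod h) - g 0\<bar>) \<longlongrightarrow> 0) (at 0)" by (rule tendsto_rabs_zero)
  have "((\<lambda>h. norm (g (cmod (0 + h)) *\<^sub>R (0 + h) - g (cmod 0) *\<^sub>R 0 - g 0 *\<^sub>R h) / norm h) \<longlongrightarrow> 0) (at (0::complex))"
  proof (rule Lim_transform_eventually[OF l])
    show "\<forall>\<^sub>F h in at 0. \<bar>g (cmod h) - g 0\<bar> = norm (g (cmod (0 + h)) *\<^sub>R (0 + h) - g (cmod 0) *\<^sub>R 0 - g 0 *\<^sub>R h) / norm h"
      unfolding eventually_at_filter
    proof (intro always_eventually allI impI)
      fix h :: complex assume "h \<noteq> 0"
      thus "\<bar>g (cmod h) - g 0\<bar> = norm (g (cmod (0 + h)) *\<^sub>R (0 + h) - g (cmod 0) *\<^sub>R 0 - g 0 *\<^sub>R h) / norm h"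
        by (simp add: scaleR_diff_left[symmetric])
    qed
  qed
  hence "((\<lambda>w. g (cmod w) *\<^sub>R w) has_derivative (\<lambda>v. g 0 *\<^sub>R v)) (at 0)"
    using lin by (simp add: has_derivative_at)
  thus ?thesis using True by simp
qed

lemma radial_cont:
  fixes g q :: "real \<Rightarrow> real" and v :: complex
  assumes gc: "continuous_on {0..<1} g" and qc: "continuous_on {0..<1} q" and q0: "q 0 = 0"
  shows "continuous_on (ball 0 1) (\<lambda>z. g (cmod z) *\<^sub>R v + (q (cmod z) * (z \<bullet> v) / (cmod z)\<^sup>2) *\<^sub>R z)"
proof -
  have A: "continuous_on (ball 0 1) (\<lambda>z::complex. g (cmod z) *\<^sub>R v)"
    by (rule continuous_on_scaleR[OF comp_cont[OF gc] continuous_on_const])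
  define T where "T = (\<lambda>z::complex. (q (cmod z) * (z \<bullet> v) / (cmod z)\<^sup>2) *\<^sub>R z)"
  have qcn: "continuous_on (ball 0 1) (\<lambda>w::complex. q (cmod w))" by (rule comp_cont[OF qc])
  have T1: "continuous_on (ball 0 1 - {0}) T"
  proof -
    have i: "continuous_on (ball 0 1 - {0}) (\<lambda>z::complex. z \<bullet> v)"
      by (rule continuous_on_inner[OF continuous_on_id continuous_on_const])
    have n: "continuous_on (ball 0 1 - {0}) (\<lambda>z::complex. (cmod z)\<^sup>2)"
      by (rule continuous_on_power[OF continuous_on_norm_id])
    have nz: "\<forall>z\<in>ball 0 1 - {0}. (cmod (z::complex))\<^sup>2 \<noteq> 0" by simp
    have "continuous_on (ball 0 1 - {0}) (\<lambda>z. q (cmod z) * (z \<bullet> v) / (cmod z)\<^sup>2)"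
      by (rule continuous_on_divide[OF continuous_on_mult[OF continuous_on_subset[OF qcn] i] n nz]) auto
    thus ?thesis unfolding T_def by (rule continuous_on_scaleR[OF _ continuous_on_id])
  qed
  have T0: "isCont T 0"
  proof -
    have "((\<lambda>w::complex. q (cmod w)) \<longlongrightarrow> 0) (at 0)"
      using comp_isCont0[OF qc] q0 unfolding isCont_def by simp
    hence "((\<lambda>w::complex. \<bar>q (cmod w)\<bar>) \<longlongrightarrow> 0) (at 0)" by (rule tendsto_rabs_zero)
    hence l: "((\<lambda>w::complex. \<bar>q (cmod w)\<bar> * norm v) \<longlongrightarrow> 0) (at 0)"
      using tendsto_mult[OF _ tendsto_const, of "\<lambda>w::complex. \<bar>q (cmod w)\<bar>" 0 "at 0" "norm v"] by simp
    have "(T \<longlongrightarrow> 0) (at 0)"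
    proof (rule Lim_null_comparison[OF _ l])
      show "\<forall>\<^sub>F x in at 0. norm (T x) \<le> \<bar>q (cmod x)\<bar> * norm v"
      proof (intro always_eventually allI)
        fix z :: complex
        show "norm (T z) \<le> \<bar>q (cmod z)\<bar> * norm v"
        proof (cases "z = 0")
          case True thus ?thesis by (simp add: T_def)
        next
          case False
          have "norm (T z) = \<bar>q (cmod z)\<bar> * \<bar>z \<bullet> v\<bar> / cmod z"
            using False by (simp add: T_def abs_mult power2_eq_square)
          also have "\<dots> \<le> \<bar>q (cmod z)\<bar> * (cmod z * norm v) / cmod z"
            using Cauchy_Schwarz_ineq2[of z v] False
            by (intro divide_right_mono mult_left_mono) auto
          also have "\<dots> = \<bar>q (cmod z)\<bar> * norm v" using False by simp
          finally show ?thesis .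
        qed
      qed
    qed
    thus ?thesis by (simp add: isCont_def T_def)
  qed
  have T: "continuous_on (ball 0 1) T"
    unfolding continuous_on_eq_continuous_at[OF open_ball]
  proof
    fix z :: complex assume z: "z \<in> ball 0 1"
    show "isCont T z"
    proof (cases "z = 0")
      case True thus ?thesis using T0 by simp
    next
      case False
      have "open (ball 0 1 - {0::complex})" by (simp add: open_Diff)
      thus ?thesis using T1 z False by (simp add: continuous_on_eq_continuous_at)
    qed
  qed
  show ?thesis using continuous_on_add[OF A T] unfolding T_def .
qed

lemma radial_ediv:
  fixes g q :: "real \<Rightarrow> real" and z :: complex
  assumes q0: "q 0 = 0"
  defines "D \<equiv> (\<lambda>v. g (cmod z) *\<^sub>R v + (q (cmod z) * (z \<bullet> v) / (cmod z)\<^sup>2) *\<^sub>R z)"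
  shows "Re (D 1) + Im (D \<i>) = 2 * g (cmod z) + q (cmod z)"
proof (cases "z = 0")
  case True thus ?thesis using q0 by (simp add: D_def)
next
  case False
  have "Re (D 1) + Im (D \<i>) = 2 * g (cmod z) + q (cmod z) * ((Re z)\<^sup>2 + (Im z)\<^sup>2) / (cmod z)\<^sup>2"
    by (simp add: D_def power2_eq_square add_divide_distrib algebra_simps)
  also have "\<dots> = 2 * g (cmod z) + q (cmod z)"
    using False by (simp add: cmod_power2[symmetric])
  finally show ?thesis .
qed

definition Sf :: "real \<Rightarrow> real" where "Sf \<rho> = sqrt (1 - (Phi \<rho>)\<^sup>2)"
definition Pf :: "real \<Rightarrow> real" where "Pf \<rho> = Yf \<rho> / Sf \<rho>"

lemma Sf_ge: assumes "0 \<le> \<rho>" "\<rho> < 1" shows "5/13 \<le> Sf \<rho>"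
proof -
  have "(Phi \<rho>)\<^sup>2 \<le> (12/13)\<^sup>2" using Phi_bounds[OF assms] by (intro power_mono) auto
  hence "(5/13)\<^sup>2 \<le> 1 - (Phi \<rho>)\<^sup>2" by (simp add: power2_eq_square)
  thus ?thesis unfolding Sf_def by (metis real_le_rsqrt)
qed

lemma Sf_pos: assumes "0 \<le> \<rho>" "\<rho> < 1" shows "0 < Sf \<rho>"
  using Sf_ge[OF assms] by simp

lemma Sf_sq: assumes "0 \<le> \<rho>" "\<rho> < 1" shows "(Sf \<rho>)\<^sup>2 = 1 - (Phi \<rho>)\<^sup>2"
proof -
  have "(Phi \<rho>)\<^sup>2 \<le> (12/13)\<^sup>2" using Phi_bounds[OF assms] by (intro power_mono) auto
  hence "0 \<le> 1 - (Phi \<rho>)\<^sup>2" by (simp add: power2_eq_square)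
  thus ?thesis by (simp add: Sf_def)
qed

lemma Sf_cont: "continuous_on {0..<1} Sf"
  unfolding Sf_def[abs_def]
  by (intro continuous_on_real_sqrt continuous_on_diff continuous_on_const continuous_on_power Phi_cont)

lemma Pf_cont: "continuous_on {0..<1} Pf"
proof -
  have "\<forall>x\<in>{0..<1}. Sf x \<noteq> 0" using Sf_pos by (metis atLeastLessThan_iff less_irrefl)
  thus ?thesis unfolding Pf_def[abs_def] by (rule continuous_on_divide[OF Yf_cont Sf_cont])
qed

lemma Sf_0: "Sf 0 = 1" by (simp add: Sf_def Phi_0)
lemma Pf_0: "Pf 0 = 4" by (simp add: Pf_def Sf_0 Yf_0)

definition Phd :: "real \<Rightarrow> real" where
  "Phd \<rho> = (1 - 3 * \<rho>\<^sup>2) / 2 * Yf \<rho> + \<rho> * (1 - \<rho>\<^sup>2) / 2 * Yd \<rho>"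

lemma Phi_deriv: assumes "0 < \<rho>" "\<rho> < 1" shows "(Phi has_real_derivative Phd \<rho>) (at \<rho>)"
proof -
  have d1: "((\<lambda>x::real. x * (1 - x\<^sup>2)) has_real_derivative 1 * (1 - \<rho>\<^sup>2) + (0 - real 2 * \<rho> ^ (2 - Suc 0)) * \<rho>) (at \<rho>)"
    by (intro DERIV_mult DERIV_ident DERIV_diff DERIV_const DERIV_pow)
  have d2: "((\<lambda>x. x * (1 - x\<^sup>2) * Yf x / 2) has_real_derivative
        ((1 * (1 - \<rho>\<^sup>2) + (0 - real 2 * \<rho> ^ (2 - Suc 0)) * \<rho>) * Yf \<rho> + Yd \<rho> * (\<rho> * (1 - \<rho>\<^sup>2))) / 2) (at \<rho>)"
    by (intro DERIV_cdivide DERIV_mult d1 Yf_deriv assms)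
  show ?thesis unfolding Phi_def[abs_def]
    by (rule DERIV_cong[OF d2]) (simp add: Phd_def power2_eq_square field_simps)
qed

definition Sd :: "real \<Rightarrow> real" where "Sd \<rho> = - (Phi \<rho> * Phd \<rho>) / Sf \<rho>"

lemma alg3: fixes s a b :: real shows "inverse s / 2 * (0 - of_nat 2 * (a * b ^ (2 - Suc 0))) = - (b * a) / s"
  by (cases "s = 0") (simp_all add: field_simps)

lemma Sf_deriv: assumes "0 < \<rho>" "\<rho> < 1" shows "(Sf has_real_derivative Sd \<rho>) (at \<rho>)"
proof -
  have r: "0 \<le> \<rho>" "\<rho> < 1" using assms by auto
  have pos: "0 < 1 - (Phi \<rho>)\<^sup>2" using Sf_pos[OF r] Sf_sq[OF r] by (metis zero_less_power2 less_irrefl)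
  have d: "((\<lambda>x. 1 - (Phi x)\<^sup>2) has_real_derivative 0 - of_nat 2 * (Phd \<rho> * Phi \<rho> ^ (2 - Suc 0))) (at \<rho>)"
    by (intro DERIV_diff DERIV_const DERIV_power Phi_deriv assms)
  have "(Sf has_real_derivative inverse (sqrt (1 - (Phi \<rho>)\<^sup>2)) / 2 * (0 - of_nat 2 * (Phd \<rho> * Phi \<rho> ^ (2 - Suc 0)))) (at \<rho>)"
    unfolding Sf_def[abs_def] by (rule DERIV_chain2[OF DERIV_real_sqrt[OF pos] d])
  moreover have "inverse (sqrt (1 - (Phi \<rho>)\<^sup>2)) / 2 * (0 - of_nat 2 * (Phd \<rho> * Phi \<rho> ^ (2 - Suc 0))) = Sd \<rho>"
    unfolding Sd_def Sf_def[symmetric] by (rule alg3)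
  ultimately show ?thesis by (rule DERIV_cong)
qed

definition Pd :: "real \<Rightarrow> real" where
  "Pd \<rho> = (Yd \<rho> * Sf \<rho> - Yf \<rho> * Sd \<rho>) / (Sf \<rho> * Sf \<rho>)"

lemma Pf_deriv: assumes "0 < \<rho>" "\<rho> < 1" shows "(Pf has_real_derivative Pd \<rho>) (at \<rho>)"
proof -
  have "Sf \<rho> \<noteq> 0" using Sf_pos[of \<rho>] assms by simp
  thus ?thesis unfolding Pf_def[abs_def] Pd_def
    by (intro DERIV_divide Yf_deriv Sf_deriv assms)
qed

definition Wf :: "real \<Rightarrow> real" where
  "Wf \<rho> = (1 - 3 * \<rho>\<^sup>2) * \<rho> * Yf \<rho> / 2 + \<rho> * (1 - \<rho>\<^sup>2) * Zf \<rho> / 2"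

definition Qf :: "real \<Rightarrow> real" where
  "Qf \<rho> = (Zf \<rho> * Sf \<rho> + Yf \<rho> * Phi \<rho> * Wf \<rho> / Sf \<rho>) / (Sf \<rho> * Sf \<rho>)"

lemma alg2:
  fixes r S Y Z P Yd :: real
  assumes "r > 0" "S \<noteq> 0" "r * Yd = Z"
  shows "r * ((Yd * S - Y * (- (P * ((1 - 3 * r\<^sup>2) / 2 * Y + r * (1 - r\<^sup>2) / 2 * Yd)) / S)) / (S * S))
       = (Z * S + Y * P * ((1 - 3 * r\<^sup>2) * r * Y / 2 + r * (1 - r\<^sup>2) * Z / 2) / S) / (S * S)"
proof -
  have Yd: "Yd = Z / r" using assms by (simp add: field_simps)
  show ?thesis unfolding Yd using assms by (simp add: field_simps)
qed

lemma Pd_Qf: assumes "0 < \<rho>" "\<rho> < 1" shows "\<rho> * Pd \<rho> = Qf \<rho>"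
proof -
  have "Sf \<rho> \<noteq> 0" using Sf_pos[of \<rho>] assms by simp
  thus ?thesis unfolding Pd_def Qf_def Sd_def Phd_def Wf_def
    by (rule alg2[OF assms(1) _ Yd_Zf[OF assms]])
qed

lemma Qf_cont: "continuous_on {0..<1} Qf"
proof -
  have nz: "\<forall>x\<in>{0..<1}. Sf x \<noteq> 0" using Sf_pos by (metis atLeastLessThan_iff less_irrefl)
  have nz2: "\<forall>x\<in>{0..<1}. Sf x * Sf x \<noteq> 0" using nz by simp
  have p1: "continuous_on {0..<1} (\<lambda>\<rho>::real. (1 - 3 * \<rho>\<^sup>2) * \<rho>)"
    by (intro continuous_on_mult continuous_on_diff continuous_on_const continuous_on_power continuous_on_id)
  have p2: "continuous_on {0..<1} (\<lambda>\<rho>::real. \<rho> * (1 - \<rho>\<^sup>2))"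
    by (intro continuous_on_mult continuous_on_diff continuous_on_const continuous_on_power continuous_on_id)
  have two: "\<forall>x\<in>{0..<1::real}. (2::real) \<noteq> 0" by simp
  have W: "continuous_on {0..<1} Wf" unfolding Wf_def[abs_def]
    by (rule continuous_on_add[OF continuous_on_divide[OF continuous_on_mult[OF p1 Yf_cont] continuous_on_const two]
          continuous_on_divide[OF continuous_on_mult[OF p2 Zf_cont] continuous_on_const two]])
  have A: "continuous_on {0..<1} (\<lambda>\<rho>. Yf \<rho> * Phi \<rho> * Wf \<rho> / Sf \<rho>)"
    by (rule continuous_on_divide[OF continuous_on_mult[OF continuous_on_mult[OF Yf_cont Phi_cont] W] Sf_cont nz])
  show ?thesis unfolding Qf_def[abs_def]
    by (rule continuous_on_divide[OF continuous_on_add[OF continuous_on_mult[OF Zf_cont Sf_cont] A]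
          continuous_on_mult[OF Sf_cont Sf_cont] nz2])
qed

lemma Qf_0: "Qf 0 = 0" by (simp add: Qf_def Zf_0 Phi_0)

definition Ff :: "real \<Rightarrow> real" where "Ff \<rho> = integral {0..\<rho>} (\<lambda>t. t * Pf t)"
definition uu :: "complex \<Rightarrow> real" where "uu z = Ff (cmod z)"

lemma tPf_cont: "continuous_on {0..<1} (\<lambda>t. t * Pf t)"
  by (rule continuous_on_mult[OF continuous_on_id Pf_cont])

lemma Ff_deriv: assumes "0 < \<rho>" "\<rho> < 1" shows "(Ff has_real_derivative \<rho> * Pf \<rho>) (at \<rho>)"
proof -
  let ?b = "(1 + \<rho>) / 2"
  have c: "continuous_on {0..?b} (\<lambda>t. t * Pf t)"
    by (rule continuous_on_subset[OF tPf_cont]) (use assms in auto)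
  have "(Ff has_real_derivative \<rho> * Pf \<rho>) (at \<rho> within {0..?b})"
    unfolding Ff_def[abs_def] by (rule integral_has_real_derivative[OF c]) (use assms in auto)
  moreover have "at \<rho> within {0..?b} = at \<rho>"
    by (rule at_within_interior) (use assms in auto)
  ultimately show ?thesis by metis
qed

lemma Pf_bounded: "\<exists>B>0. \<forall>t\<in>{0..1/2}. \<bar>Pf t\<bar> \<le> B"
proof -
  have "compact (Pf ` {0..1/2})"
    by (rule compact_continuous_image[OF continuous_on_subset[OF Pf_cont] compact_Icc]) auto
  hence "bounded (Pf ` {0..1/2})" by (rule compact_imp_bounded)
  then obtain B where "B > 0" "\<forall>x\<in>Pf ` {0..1/2}. norm x \<le> B" using bounded_pos by blast
  thus ?thesis by auto
qed

lemma Ff_small: assumes B: "\<forall>t\<in>{0..1/2}. \<bar>Pf t\<bar> \<le> B" and r: "0 \<le> \<rho>" "\<rho> \<le> 1/2"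
  shows "\<bar>Ff \<rho>\<bar> \<le> B * \<rho>\<^sup>2"
proof -
  have "norm (integral {0..\<rho>} (\<lambda>t. t * Pf t)) \<le> integral {0..\<rho>} (\<lambda>t. \<rho> * B)"
  proof (rule integral_norm_bound_integral)
    show "(\<lambda>t. t * Pf t) integrable_on {0..\<rho>}"
      by (rule integrable_continuous_interval[OF continuous_on_subset[OF tPf_cont]]) (use r in auto)
    show "(\<lambda>t. \<rho> * B) integrable_on {0..\<rho>}" by (rule integrable_continuous_interval[OF continuous_on_const])
    fix t assume t: "t \<in> {0..\<rho>}"
    have "\<bar>t * Pf t\<bar> = t * \<bar>Pf t\<bar>" using t by (simp add: abs_mult)
    also have "\<dots> \<le> \<rho> * B" using t r B by (intro mult_mono) auto
    finally show "norm (t * Pf t) \<le> \<rho> * B" by simp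
  qed
  thus ?thesis using r by (simp add: Ff_def power2_eq_square mult_ac)
qed

lemma Ff_0: "Ff 0 = 0" by (simp add: Ff_def)

lemma uu_deriv: assumes z: "cmod z < 1"
  shows "(uu has_derivative (\<lambda>v. Pf (cmod z) * (z \<bullet> v))) (at z)"
proof (cases "z = 0")
  case False
  let ?r = "cmod z"
  have r: "0 < ?r" "?r < 1" using False z by auto
  have "((\<lambda>w. Ff (cmod w)) has_derivative (\<lambda>h. (?r * Pf ?r) * (h \<bullet> z / ?r))) (at z)"
    using has_derivative_compose[OF norm_deriv[OF False] Ff_deriv[OF r, unfolded has_field_derivative_def]] .
  moreover have "(\<lambda>h. (?r * Pf ?r) * (h \<bullet> z / ?r)) = (\<lambda>v. Pf (cmod z) * (z \<bullet> v))"
    using r by (auto simp: inner_commute)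
  ultimately show ?thesis unfolding uu_def[abs_def] by simp
next
  case True
  obtain B where B: "B > 0" "\<forall>t\<in>{0..1/2}. \<bar>Pf t\<bar> \<le> B" using Pf_bounded by blast
  have lin: "bounded_linear (\<lambda>v::complex. 0::real)" by (rule bounded_linear_zero)
  have l: "((\<lambda>h::complex. B * norm h) \<longlongrightarrow> 0) (at 0)"
    using tendsto_mult[OF tendsto_const tendsto_norm[OF tendsto_ident_at], of B 0 UNIV] by simp
  have "((\<lambda>h. norm (uu (0 + h) - uu 0 - 0) / norm h) \<longlongrightarrow> 0) (at (0::complex))"
  proof (rule Lim_null_comparison[OF _ l])
    show "\<forall>\<^sub>F h in at 0. norm (norm (uu (0 + h) - uu 0 - 0) / norm h) \<le> B * norm h"
      unfolding eventually_at
    proof (intro exI[of _ "1/2"] conjI ballI impI allI)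
      fix h :: complex assume h: "h \<noteq> 0 \<and> dist h 0 < 1/2"
      hence hn: "0 < norm h" "norm h \<le> 1/2" by auto
      have "\<bar>Ff (norm h)\<bar> \<le> B * (norm h)\<^sup>2" by (rule Ff_small[OF B(2)]) (use hn in auto)
      hence "\<bar>Ff (norm h)\<bar> / norm h \<le> B * (norm h)\<^sup>2 / norm h" using hn by (intro divide_right_mono) auto
      thus "norm (norm (uu (0 + h) - uu 0 - 0) / norm h) \<le> B * norm h"
        using hn by (simp add: uu_def Ff_0 power2_eq_square)
    qed simp
  qed
  hence "(uu has_derivative (\<lambda>v. 0)) (at 0)" using lin by (simp add: has_derivative_at)
  thus ?thesis using True by simp
qed

lemma egrad_uu: assumes "cmod z < 1" shows "egrad uu z = Pf (cmod z) *\<^sub>R z"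
proof -
  have "frechet_derivative uu (at z) = (\<lambda>v. Pf (cmod z) * (z \<bullet> v))"
    using frechet_derivative_at[OF uu_deriv[OF assms]] by simp
  thus ?thesis by (simp add: egrad_def complex_eq_iff)
qed

definition DE :: "complex \<Rightarrow> complex \<Rightarrow> complex" where
  "DE z = (\<lambda>v. Pf (cmod z) *\<^sub>R v + (Qf (cmod z) * (z \<bullet> v) / (cmod z)\<^sup>2) *\<^sub>R z)"

definition DX :: "complex \<Rightarrow> complex \<Rightarrow> complex" where
  "DX z = (\<lambda>v. Yf (cmod z) *\<^sub>R v + (Zf (cmod z) * (z \<bullet> v) / (cmod z)\<^sup>2) *\<^sub>R z)"

lemma egrad_deriv: assumes "cmod z < 1" shows "(egrad uu has_derivative DE z) (at z)"
proof -
  have "((\<lambda>w. Pf (cmod w) *\<^sub>R w) has_derivative DE z) (at z)"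
    unfolding DE_def by (rule radial_deriv[OF Pf_cont Pf_deriv Pd_Qf assms])
  thus ?thesis
    by (rule has_derivative_transform_within_open[where s="ball 0 1"]) (use assms egrad_uu in auto)
qed

lemma lam_sq: assumes "cmod z < 1" shows "(lam z)\<^sup>2 = 4 / (1 - (cmod z)\<^sup>2)\<^sup>2"
  by (simp add: lam_def power_divide)

lemma lam_nz: assumes "cmod z < 1" shows "lam z \<noteq> 0"
  using sq_lt1[of "cmod z"] assms by (simp add: lam_def)

lemma hnormsq_uu: assumes z: "cmod z < 1"
  shows "hnormsq z (hgrad uu z) = (Phi (cmod z))\<^sup>2 / (Sf (cmod z))\<^sup>2"
proof -
  let ?r = "cmod z"
  have r: "0 \<le> ?r" "?r < 1" using z by auto
  have a: "1 - ?r\<^sup>2 \<noteq> 0" using sq_lt1[OF r] by simp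
  have S: "Sf ?r \<noteq> 0" using Sf_pos[OF r] by simp
  have L: "lam z \<noteq> 0" by (rule lam_nz[OF z])
  have hg: "hgrad uu z = (Pf ?r / (lam z)\<^sup>2) *\<^sub>R z" by (simp add: hgrad_def egrad_uu[OF z])
  have "hnormsq z (hgrad uu z) = (lam z)\<^sup>2 * (\<bar>Pf ?r / (lam z)\<^sup>2\<bar> * ?r)\<^sup>2"
    unfolding hnormsq_def hg by simp
  also have "(\<bar>Pf ?r / (lam z)\<^sup>2\<bar> * ?r)\<^sup>2 = (Pf ?r / (lam z)\<^sup>2)\<^sup>2 * ?r\<^sup>2"
    by (simp only: power_mult_distrib power2_abs)
  also have "(lam z)\<^sup>2 * ((Pf ?r / (lam z)\<^sup>2)\<^sup>2 * ?r\<^sup>2) = (Pf ?r)\<^sup>2 * ?r\<^sup>2 / (lam z)\<^sup>2"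
    using L by (simp add: field_simps power2_eq_square)
  also have "\<dots> = (Yf ?r)\<^sup>2 * ?r\<^sup>2 * (1 - ?r\<^sup>2)\<^sup>2 / (4 * (Sf ?r)\<^sup>2)"
    unfolding lam_sq[OF z] Pf_def using a S by (simp add: field_simps power2_eq_square)
  also have "\<dots> = (Phi ?r)\<^sup>2 / (Sf ?r)\<^sup>2"
    unfolding Phi_def using S by (simp add: field_simps power2_eq_square)
  finally show ?thesis .
qed

lemma Wg_uu: assumes z: "cmod z < 1" shows "Wg uu z = 1 / Sf (cmod z)"
proof -
  let ?r = "cmod z"
  have r: "0 \<le> ?r" "?r < 1" using z by auto
  have S: "0 < Sf ?r" using Sf_pos[OF r] by simp
  have "1 + (Phi ?r)\<^sup>2 / (Sf ?r)\<^sup>2 = ((Sf ?r)\<^sup>2 + (Phi ?r)\<^sup>2) / (Sf ?r)\<^sup>2"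
    using S by (simp add: field_simps)
  also have "\<dots> = (1 / Sf ?r)\<^sup>2" using Sf_sq[OF r] by (simp add: power_divide)
  finally have "Wg uu z = sqrt ((1 / Sf ?r)\<^sup>2)" by (simp add: Wg_def hnormsq_uu[OF z])
  thus ?thesis using S by simp
qed

lemma X_uu: assumes z: "cmod z < 1"
  shows "(lam z)\<^sup>2 *\<^sub>R graph_unit_field uu z = Yf (cmod z) *\<^sub>R z"
proof -
  let ?r = "cmod z"
  have r: "0 \<le> ?r" "?r < 1" using z by auto
  have S: "Sf ?r \<noteq> 0" using Sf_pos[OF r] by simp
  have L: "lam z \<noteq> 0" by (rule lam_nz[OF z])
  have "(lam z)\<^sup>2 *\<^sub>R graph_unit_field uu z = ((lam z)\<^sup>2 * Sf ?r * (Pf ?r / (lam z)\<^sup>2)) *\<^sub>R z"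
    by (simp add: graph_unit_field_def Wg_uu[OF z] hgrad_def egrad_uu[OF z])
  also have "(lam z)\<^sup>2 * Sf ?r * (Pf ?r / (lam z)\<^sup>2) = Yf ?r"
    using L S by (simp add: Pf_def)
  finally show ?thesis .
qed

lemma X_deriv: assumes "cmod z < 1"
  shows "((\<lambda>w. (lam w)\<^sup>2 *\<^sub>R graph_unit_field uu w) has_derivative DX z) (at z)"
proof -
  have "((\<lambda>w. Yf (cmod w) *\<^sub>R w) has_derivative DX z) (at z)"
    unfolding DX_def by (rule radial_deriv[OF Yf_cont Yf_deriv Yd_Zf assms])
  thus ?thesis
    by (rule has_derivative_transform_within_open[where s="ball 0 1"]) (use assms X_uu in auto)
qed

lemma mean_uu: assumes z: "cmod z < 1"
  shows "graph_mean_curv uu z = Sf (cmod z)"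
proof -
  let ?r = "cmod z"
  have r: "0 \<le> ?r" "?r < 1" using z by auto
  have a: "(1 - ?r\<^sup>2)\<^sup>2 \<noteq> 0" using sq_lt1[OF r] by simp
  have fd: "frechet_derivative (\<lambda>w. (lam w)\<^sup>2 *\<^sub>R graph_unit_field uu w) (at z) = DX z"
    using frechet_derivative_at[OF X_deriv[OF z]] by simp
  have "ediv (\<lambda>w. (lam w)\<^sup>2 *\<^sub>R graph_unit_field uu w) z = 2 * Yf ?r + Zf ?r"
    unfolding ediv_def fd DX_def by (rule radial_ediv[where g=Yf and q=Zf and z=z, OF Zf_0])
  also have "\<dots> = 8 * Sf ?r / (1 - ?r\<^sup>2)\<^sup>2" by (simp add: Zf_def Sf_def)
  finally have e: "ediv (\<lambda>w. (lam w)\<^sup>2 *\<^sub>R graph_unit_field uu w) z = 8 * Sf ?r / (1 - ?r\<^sup>2)\<^sup>2" .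
  have "graph_mean_curv uu z = 1/2 * (1 / (4 / (1 - ?r\<^sup>2)\<^sup>2) * (8 * Sf ?r / (1 - ?r\<^sup>2)\<^sup>2))"
    unfolding graph_mean_curv_def hdiv_def e lam_sq[OF z] ..
  also have "\<dots> = Sf ?r" using a by (simp add: field_simps)
  finally show ?thesis .
qed

lemma C2_uu: "C2_on_disk uu"
  unfolding C2_on_disk_def hdisk_def
proof (intro conjI ballI allI)
  fix z :: complex assume "z \<in> ball 0 1"
  hence z: "cmod z < 1" by simp
  show "uu differentiable at z" using uu_deriv[OF z] by (rule differentiableI)
  show "egrad uu differentiable at z" using egrad_deriv[OF z] by (rule differentiableI)
next
  show "continuous_on (ball 0 1) (egrad uu)"
  proof (rule continuous_on_eq)
    show "continuous_on (ball 0 1) (\<lambda>w. Pf (cmod w) *\<^sub>R w)"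
      by (rule continuous_on_scaleR[OF comp_cont[OF Pf_cont] continuous_on_id])
    show "\<And>x. x \<in> ball 0 1 \<Longrightarrow> Pf (cmod x) *\<^sub>R x = egrad uu x" using egrad_uu by simp
  qed
next
  fix v :: complex
  show "continuous_on (ball 0 1) (\<lambda>z. frechet_derivative (egrad uu) (at z) v)"
  proof (rule continuous_on_eq)
    show "continuous_on (ball 0 1) (\<lambda>z. Pf (cmod z) *\<^sub>R v + (Qf (cmod z) * (z \<bullet> v) / (cmod z)\<^sup>2) *\<^sub>R z)"
      by (rule radial_cont[OF Pf_cont Qf_cont Qf_0])
    fix z :: complex assume "z \<in> ball 0 1"
    hence z: "cmod z < 1" by simp
    show "Pf (cmod z) *\<^sub>R v + (Qf (cmod z) * (z \<bullet> v) / (cmod z)\<^sup>2) *\<^sub>R z = frechet_derivative (egrad uu) (at z) v"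
      using fun_cong[OF frechet_derivative_at[OF egrad_deriv[OF z]], of v] by (simp add: DE_def)
  qed
qed

lemma translator_uu: "entire_upward_translator_graph uu"
  unfolding entire_upward_translator_graph_def
proof (intro conjI C2_uu ballI)
  fix z assume "z \<in> hdisk"
  hence z: "cmod z < 1" by (simp add: hdisk_def)
  have r: "0 \<le> cmod z" "cmod z < 1" using z by auto
  have nv: "normal_vert uu z = Sf (cmod z)"
    using Sf_pos[OF r] by (simp add: normal_vert_def Wg_uu[OF z])
  show "normal_vert uu z > 0" using nv Sf_pos[OF r] by simp
  show "graph_mean_curv uu z = normal_vert uu z" using nv mean_uu[OF z] by simp
qed

lemma rot_uu: "rot_symmetric 0 uu"
  unfolding rot_symmetric_def hrot_def mob_def uu_def by (simp add: norm_mult)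

theorem theorem3p3:
  shows "\<exists>u :: complex \<Rightarrow> real. \<exists>p \<in> hdisk.
           entire_upward_translator_graph u \<and> rot_symmetric p u"
proof (intro exI[of _ uu] bexI[of _ 0] conjI translator_uu rot_uu)
  show "0 \<in> hdisk" by (simp add: hdisk_def)
qed

end
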